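(* Let $z_1,z_2,z_3,z_4\in\mathbb{C}$ be the vertices of a convex quadrilateral, labelled in cyclic order around its boundary. For $j\neq k$ put $z_{jk}=z_k-z_j$, $r_{jk}=|z_{jk}|$, and let $At=At(z_1,z_2,z_3,z_4)$ be the (planar) Atiyah determinant of these points. Let the angles $\alpha_j,\beta_j,\gamma_j$ ($j=1,\dots,4$, indices mod $4$) be $$\alpha_j=\angle z_{j+1}z_jz_{j+2},\qquad \beta_j=\angle z_{j+2}z_jz_{j-1},\qquad \gamma_j=\angle z_{j-1}z_jz_{j+1}.$$ Define $$S_1=\sum_{j=1}^4(\cos\alpha_j+\cos\beta_j+\cos\gamma_j),\qquad S_2=\sum_{j=1}^4(\cos\alpha_j+\cos\beta_j+\cos\gamma_j)(\cos\alpha_{j+1}+\cos\gamma_{j+2}+\cos\beta_{j+3}),$$ and $$E=2\sum_{j=1}^4\Big(\sin\alpha_j\sin\alpha_{j+1}+\sin\beta_j\sin\beta_{j+1}-\sin\gamma_j\sin\alpha_{j+1}-\sin\gamma_{j+1}\sin\beta_j+\sin\gamma_j\sin\alpha_{j+2}+\sin\gamma_j\sin\beta_{j+2}\Big)$$ $$\qquad-4\sum_{j=1}^4\sin\alpha_{j+1}\sin\beta_j+4\sin\gamma_1\sin\gamma_3+4\sin\gamma_2\sin\gamma_4 .$$ Then $$At=r_{12}r_{13}r_{14}r_{23}r_{24}r_{34}\,\big(24+8S_1+2S_2+E\big).$$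
   Context: Planar Atiyah determinant: identify the plane containing the points with $\{0\}\times\mathbb{C}\subset\mathbb{R}\times\mathbb{C}=\mathbb{R}^3$. For distinct $z_1,\dots,z_4\in\mathbb{C}$ and $j\ne k$ let $z_{jk}=z_k-z_j$, $r_{jk}=|z_{jk}|$, $u_{jk}=z_{jk}/r_{jk}$. For an "observer" $k$ and another point $j\neq k$ define the vector $w_{kj}=(x_{kj},y_{kj})\in\mathbb{C}^2$ (a Hopf lift of $z_{kj}$) by $w_{kj}=\sqrt{r_{kj}}\,(1,\overline{u}_{kj})$ if $k<j$ and $w_{kj}=\sqrt{r_{kj}}\,(u_{kj},1)$ if $k>j$. Let $C_k\in\mathbb{C}^4$ be the vector of coefficients of $1,t,t^2,t^3$ in the polynomial $\prod_{j\neq k}(x_{kj}+y_{kj}t)$ (the symmetric tensor product of the three vectors $w_{kj}$). The Atiyah determinant $At(z_1,\dots,z_4)$ is the determinant of the $4\times4$ matrix whose $k$-th column is $C_k$; it is a real number for planar points. Angles $\angle XYZ\in[0,\pi]$ denote the usual unsigned angle at $Y$. *)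

theory Defs
  imports "Jordan_Normal_Form.Determinant" "HOL-Computational_Algebra.Polynomial"
begin

definition uangle :: "complex \<Rightarrow> complex \<Rightarrow> complex \<Rightarrow> real" where
  "uangle x y z = arccos (Re (cnj (x - y) * (z - y)) / (cmod (x - y) * cmod (z - y)))"

text \<open>Points indexed 0..3 (paper's 1..4).  z_kj = z_j - z_k, r_kj = |z_kj|, u_kj = z_kj / r_kj.
  Hopf lift w_kj = (x_kj, y_kj).\<close>
definition hopf_x :: "(nat \<Rightarrow> complex) \<Rightarrow> nat \<Rightarrow> nat \<Rightarrow> complex" where
  "hopf_x p k j = (let zz = p j - p k; r = cmod zz; u = zz / complex_of_real r in
     if k < j then complex_of_real (sqrt r) else complex_of_real (sqrt r) * u)"

definition hopf_y :: "(nat \<Rightarrow> complex) \<Rightarrow> nat \<Rightarrow> nat \<Rightarrow> complex" where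
  "hopf_y p k j = (let zz = p j - p k; r = cmod zz; u = zz / complex_of_real r in
     if k < j then complex_of_real (sqrt r) * cnj u else complex_of_real (sqrt r))"

definition atiyah_poly :: "(nat \<Rightarrow> complex) \<Rightarrow> nat \<Rightarrow> complex poly" where
  "atiyah_poly p k = (\<Prod>j\<in>{0..<4} - {k}. [:hopf_x p k j, hopf_y p k j:])"

text \<open>Atiyah determinant: 4x4 matrix whose k-th column is C_k, i.e. entry (i,k) = coefficient of t^i.\<close>
definition Atiyah :: "complex \<Rightarrow> complex \<Rightarrow> complex \<Rightarrow> complex \<Rightarrow> complex" where
  "Atiyah z1 z2 z3 z4 = (let p = (\<lambda>i. [z1, z2, z3, z4] ! i) in
     det (mat 4 4 (\<lambda>(i, k). coeff (atiyah_poly p k) i)))"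

definition cross3 :: "complex \<Rightarrow> complex \<Rightarrow> complex \<Rightarrow> real" where
  "cross3 a b c = Im (cnj (b - a) * (c - a))"

text \<open>Vertex j (integer, taken mod 4, paper's labels 1..4).\<close>
definition vtx :: "complex \<Rightarrow> complex \<Rightarrow> complex \<Rightarrow> complex \<Rightarrow> int \<Rightarrow> complex" where
  "vtx z1 z2 z3 z4 j = [z1, z2, z3, z4] ! nat ((j - 1) mod 4)"

text \<open>z1 z2 z3 z4 are the vertices of a (nondegenerate) convex quadrilateral in this cyclic order:
  for every side z_j z_{j+1}, the two other vertices lie strictly on the same side of its line,
  and this side is the same for all sides (consistent orientation).\<close>
definition convex_quad :: "complex \<Rightarrow> complex \<Rightarrow> complex \<Rightarrow> complex \<Rightarrow> bool" where
  "convex_quad z1 z2 z3 z4 \<longleftrightarrow>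
     (let v = vtx z1 z2 z3 z4 in
       (\<forall>j\<in>{1..4}. cross3 (v j) (v (j+1)) (v (j+2)) > 0 \<and> cross3 (v j) (v (j+1)) (v (j+3)) > 0) \<or>
       (\<forall>j\<in>{1..4}. cross3 (v j) (v (j+1)) (v (j+2)) < 0 \<and> cross3 (v j) (v (j+1)) (v (j+3)) < 0))"

end

theory Submission imports Defs begin


definition UU :: "complex \<Rightarrow> complex \<Rightarrow> complex" where
  "UU x y = (x - y) / complex_of_real (cmod (x - y))"
definition SS :: "complex \<Rightarrow> complex \<Rightarrow> complex" where
  "SS x y = complex_of_real (sqrt (cmod (x - y)))"

lemma UU_swap: "UU x y = - UU y x"
  unfolding UU_def by (metis norm_minus_commute minus_diff_eq minus_divide_left)

lemma SS_swap: "SS x y = SS y x"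
  unfolding SS_def by (simp add: norm_minus_commute)

lemma SS_sq: "SS x y * SS x y = complex_of_real (cmod (x - y))"
  unfolding SS_def by (simp flip: of_real_mult)

lemma UU_unit: "x \<noteq> y \<Longrightarrow> UU x y * cnj (UU x y) = 1"
proof -
  assume "x \<noteq> y"
  have "(x - y) * cnj (x - y) = complex_of_real ((cmod (x - y))^2)" by (metis complex_norm_square)
  thus ?thesis using \<open>x \<noteq> y\<close> unfolding UU_def
    by (simp add: power2_eq_square field_simps del: complex_cnj_diff)
qed

lemma UU_prod:
  assumes "x \<noteq> y" "z \<noteq> y"
  shows "UU z y * cnj (UU x y) = (cnj (x - y) * (z - y)) / complex_of_real (cmod (x - y) * cmod (z - y))"
  unfolding UU_def using assms by (simp add: field_simps)

lemma cross3_rot: "cross3 a b c = cross3 b c a"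
  unfolding cross3_def by (simp add: algebra_simps)
lemma cross3_swap: "cross3 a c b = - cross3 a b c"
  unfolding cross3_def by (simp add: algebra_simps)
lemma cross3_distinct: "cross3 a b c \<noteq> 0 \<Longrightarrow> a \<noteq> b \<and> a \<noteq> c \<and> b \<noteq> c"
  unfolding cross3_def by (auto simp: algebra_simps)

lemma ratio_bounds:
  fixes a b :: complex
  assumes "a \<noteq> 0" "b \<noteq> 0"
  shows "-1 \<le> Re (cnj a * b) / (cmod a * cmod b)" "Re (cnj a * b) / (cmod a * cmod b) \<le> 1"
proof -
  have "\<bar>Re (cnj a * b)\<bar> \<le> cmod a * cmod b"
    using abs_Re_le_cmod[of "cnj a * b"] by (simp add: norm_mult)
  moreover have "cmod a * cmod b > 0" using assms by simp
  ultimately show "-1 \<le> Re (cnj a * b) / (cmod a * cmod b)" "Re (cnj a * b) / (cmod a * cmod b) \<le> 1"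
    by (auto simp: divide_le_eq le_divide_eq abs_le_iff)
qed

lemma cos_ang:
  assumes "x \<noteq> y" "z \<noteq> y"
  shows "2 * complex_of_real (cos (uangle x y z)) = UU z y * cnj (UU x y) + UU x y * cnj (UU z y)"
proof -
  define w where "w = cnj (x - y) * (z - y)"
  have c: "cos (uangle x y z) = Re w / (cmod (x - y) * cmod (z - y))"
    unfolding uangle_def w_def using ratio_bounds[of "x - y" "z - y"] assms by (simp add: cos_arccos)
  have "UU x y * cnj (UU z y) = cnj (UU z y * cnj (UU x y))" by simp
  hence "UU z y * cnj (UU x y) + UU x y * cnj (UU z y) = (w + cnj w) / complex_of_real (cmod (x - y) * cmod (z - y))"
    using UU_prod[OF assms] unfolding w_def by (simp add: add_divide_distrib)
  also have "\<dots> = 2 * complex_of_real (Re w / (cmod (x - y) * cmod (z - y)))"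
    by (simp add: complex_add_cnj)
  finally show ?thesis using c by simp
qed

lemma sin_ang:
  assumes "x \<noteq> y" "z \<noteq> y" "cross3 y x z \<noteq> 0"
  shows "2 * complex_of_real (sin (uangle x y z)) * (complex_of_real (sgn (cross3 y x z)) * \<i>) =
     UU z y * cnj (UU x y) - UU x y * cnj (UU z y)"
proof -
  define w where "w = cnj (x - y) * (z - y)"
  define m where "m = cmod (x - y) * cmod (z - y)"
  have m: "m > 0" using assms unfolding m_def by simp
  have cw: "cmod w = m" unfolding w_def m_def by (simp add: norm_mult del: complex_cnj_diff)
  have im: "Im w = cross3 y x z" unfolding w_def cross3_def by simp
  have "sin (uangle x y z) = sqrt (1 - (Re w / m)^2)"
    unfolding uangle_def w_def m_def using ratio_bounds[of "x - y" "z - y"] assms by (simp add: sin_arccos)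
  also have mm: "m^2 = (Re w)^2 + (Im w)^2" using cw cmod_power2[of w] by simp
  have "1 - (Re w / m)^2 = (m^2 - (Re w)^2) / m^2"
    using m by (simp add: power_divide field_simps)
  also have "\<dots> = (Im w / m)^2" by (simp add: mm power_divide)
  finally have s: "sin (uangle x y z) = \<bar>Im w\<bar> / m" using m by simp
  have "UU x y * cnj (UU z y) = cnj (UU z y * cnj (UU x y))" by simp
  hence "UU z y * cnj (UU x y) - UU x y * cnj (UU z y) = (w - cnj w) / complex_of_real m"
    using UU_prod[OF assms(1,2)] unfolding w_def m_def by (simp add: diff_divide_distrib)
  also have "\<dots> = complex_of_real (2 * Im w / m) * \<i>"
    by (simp add: complex_diff_cnj)
  finally have r: "UU z y * cnj (UU x y) - UU x y * cnj (UU z y) = complex_of_real (2 * Im w / m) * \<i>" .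
  have key: "\<bar>Im w\<bar> * sgn (Im w) = Im w"
    by (cases "Im w > 0"; cases "Im w < 0") (auto simp: sgn_if)
  have "complex_of_real \<bar>Im w\<bar> * complex_of_real (sgn (Im w)) = complex_of_real (Im w)"
    by (metis key of_real_mult)
  thus ?thesis unfolding s r im[symmetric] using m by (simp add: field_simps)
qed

definition leib4 :: "(nat \<Rightarrow> nat \<Rightarrow> 'a::comm_ring_1) \<Rightarrow> 'a" where
  "leib4 g = g 0 0 * g 1 1 * g 2 2 * g 3 3 - g 0 0 * g 1 1 * g 2 3 * g 3 2 - g 0 0 * g 1 2 * g 2 1 * g 3 3 + g 0 0 * g 1 2 * g 2 3 * g 3 1 + g 0 0 * g 1 3 * g 2 1 * g 3 2 - g 0 0 * g 1 3 * g 2 2 * g 3 1 - g 0 1 * g 1 0 * g 2 2 * g 3 3 + g 0 1 * g 1 0 * g 2 3 * g 3 2 + g 0 1 * g 1 2 * g 2 0 * g 3 3 - g 0 1 * g 1 2 * g 2 3 * g 3 0 - g 0 1 * g 1 3 * g 2 0 * g 3 2 + g 0 1 * g 1 3 * g 2 2 * g 3 0 + g 0 2 * g 1 0 * g 2 1 * g 3 3 - g 0 2 * g 1 0 * g 2 3 * g 3 1 - g 0 2 * g 1 1 * g 2 0 * g 3 3 + g 0 2 * g 1 1 * g 2 3 * g 3 0 + g 0 2 * g 1 3 * g 2 0 * g 3 1 - g 0 2 * g 1 3 * g 2 1 * g 3 0 - g 0 3 * g 1 0 * g 2 1 * g 3 2 + g 0 3 * g 1 0 * g 2 2 * g 3 1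 + g 0 3 * g 1 1 * g 2 0 * g 3 2 - g 0 3 * g 1 1 * g 2 2 * g 3 0 - g 0 3 * g 1 2 * g 2 0 * g 3 1 + g 0 3 * g 1 2 * g 2 1 * g 3 0"


lemma leib4_cong: "(\<And>i k. i < 4 \<Longrightarrow> k < 4 \<Longrightarrow> g i k = g' i k) \<Longrightarrow> leib4 g = leib4 g'"
  unfolding leib4_def by simp

lemma leib4_scale: "leib4 (\<lambda>i k. c k * g i k) = c 0 * c 1 * c 2 * c 3 * leib4 g" for c :: "nat \<Rightarrow> complex"
  unfolding leib4_def by Groebner_Basis.algebra

lemma hx_lt: "k < j \<Longrightarrow> hopf_x p k j = SS (p j) (p k)"
  by (simp add: hopf_x_def SS_def Let_def)
lemma hy_lt: "k < j \<Longrightarrow> hopf_y p k j = SS (p j) (p k) * cnj (UU (p j) (p k))"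
  by (simp add: hopf_y_def SS_def UU_def Let_def)
lemma hx_gt: "j < k \<Longrightarrow> hopf_x p k j = SS (p j) (p k) * UU (p j) (p k)"
  by (simp add: hopf_x_def SS_def UU_def Let_def)
lemma hy_gt: "j < k \<Longrightarrow> hopf_y p k j = SS (p j) (p k)"
  by (simp add: hopf_y_def SS_def Let_def)

lemma ap_sets: "{0..<4::nat} - {0} = {1,2,3}" "{0..<4::nat} - {1} = {0,2,3}"
  "{0..<4::nat} - {2} = {0,1,3}" "{0..<4::nat} - {3} = {0,1,2}"
  by auto

lemma lin_smult: "[:s, s * b:] = smult s [:1, b:]" "[:s * a, s:] = smult s [:a, 1:]" for s a b :: complex
  by simp_all

lemma prod3: "a \<noteq> b \<Longrightarrow> a \<noteq> c \<Longrightarrow> b \<noteq> c \<Longrightarrow> (\<Prod>j\<in>{a,b,c}. g j) = g a * (g b * g c)" for g :: "nat \<Rightarrow> complex poly"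
  by simp

lemma smult3: "smult a P * (smult b Q * smult c R) = smult (a * (b * c)) (P * (Q * R))" for a b c :: complex
  by (simp add: mult_smult_left mult_smult_right smult_smult mult.commute mult.left_commute)

lemma apx: "atiyah_poly p 0 = [:hopf_x p 0 1, hopf_y p 0 1:] * ([:hopf_x p 0 2, hopf_y p 0 2:] * [:hopf_x p 0 3, hopf_y p 0 3:])"
  "atiyah_poly p 1 = [:hopf_x p 1 0, hopf_y p 1 0:] * ([:hopf_x p 1 2, hopf_y p 1 2:] * [:hopf_x p 1 3, hopf_y p 1 3:])"
  "atiyah_poly p 2 = [:hopf_x p 2 0, hopf_y p 2 0:] * ([:hopf_x p 2 1, hopf_y p 2 1:] * [:hopf_x p 2 3, hopf_y p 2 3:])"
  "atiyah_poly p 3 = [:hopf_x p 3 0, hopf_y p 3 0:] * ([:hopf_x p 3 1, hopf_y p 3 1:] * [:hopf_x p 3 2, hopf_y p 3 2:])"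
  unfolding atiyah_poly_def ap_sets by (simp_all only: prod3 zero_neq_one one_neq_zero zero_neq_numeral numeral_neq_zero
     numeral_eq_iff num.distinct num.inject one_eq_numeral_iff numeral_eq_one_iff semiring_norm not_False_eq_True simp_thms)

lemma hvals:
  "hopf_x p 0 1 = SS (p 1) (p 0)"
  "hopf_y p 0 1 = SS (p 1) (p 0) * cnj (UU (p 1) (p 0))"
  "hopf_x p 0 2 = SS (p 2) (p 0)"
  "hopf_y p 0 2 = SS (p 2) (p 0) * cnj (UU (p 2) (p 0))"
  "hopf_x p 0 3 = SS (p 3) (p 0)"
  "hopf_y p 0 3 = SS (p 3) (p 0) * cnj (UU (p 3) (p 0))"
  "hopf_x p 1 0 = SS (p 1) (p 0) * (- UU (p 1) (p 0))"
  "hopf_y p 1 0 = SS (p 1) (p 0)"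
  "hopf_x p 1 2 = SS (p 2) (p 1)"
  "hopf_y p 1 2 = SS (p 2) (p 1) * cnj (UU (p 2) (p 1))"
  "hopf_x p 1 3 = SS (p 3) (p 1)"
  "hopf_y p 1 3 = SS (p 3) (p 1) * cnj (UU (p 3) (p 1))"
  "hopf_x p 2 0 = SS (p 2) (p 0) * (- UU (p 2) (p 0))"
  "hopf_y p 2 0 = SS (p 2) (p 0)"
  "hopf_x p 2 1 = SS (p 2) (p 1) * (- UU (p 2) (p 1))"
  "hopf_y p 2 1 = SS (p 2) (p 1)"
  "hopf_x p 2 3 = SS (p 3) (p 2)"
  "hopf_y p 2 3 = SS (p 3) (p 2) * cnj (UU (p 3) (p 2))"
  "hopf_x p 3 0 = SS (p 3) (p 0) * (- UU (p 3) (p 0))"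
  "hopf_y p 3 0 = SS (p 3) (p 0)"
  "hopf_x p 3 1 = SS (p 3) (p 1) * (- UU (p 3) (p 1))"
  "hopf_y p 3 1 = SS (p 3) (p 1)"
  "hopf_x p 3 2 = SS (p 3) (p 2) * (- UU (p 3) (p 2))"
  "hopf_y p 3 2 = SS (p 3) (p 2)"
  apply (simp_all add: hx_lt hy_lt hx_gt hy_gt)
  by (metis SS_swap UU_swap mult_minus_right)+

lemma lin_smult2: "[:s * (- a), s:] = smult s [:- a, 1:]" for s a :: complex
  by simp

lemma ap0: "atiyah_poly p 0 = smult (SS (p 1) (p 0) * (SS (p 2) (p 0) * SS (p 3) (p 0)))
   ([:1, cnj (UU (p 1) (p 0)):] * ([:1, cnj (UU (p 2) (p 0)):] * [:1, cnj (UU (p 3) (p 0)):]))"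
  unfolding apx hvals lin_smult lin_smult2 smult3 ..
lemma ap1: "atiyah_poly p 1 = smult (SS (p 1) (p 0) * (SS (p 2) (p 1) * SS (p 3) (p 1)))
   ([:- UU (p 1) (p 0), 1:] * ([:1, cnj (UU (p 2) (p 1)):] * [:1, cnj (UU (p 3) (p 1)):]))"
  unfolding apx hvals lin_smult lin_smult2 smult3 ..
lemma ap2: "atiyah_poly p 2 = smult (SS (p 2) (p 0) * (SS (p 2) (p 1) * SS (p 3) (p 2)))
   ([:- UU (p 2) (p 0), 1:] * ([:- UU (p 2) (p 1), 1:] * [:1, cnj (UU (p 3) (p 2)):]))"
  unfolding apx hvals lin_smult lin_smult2 smult3 ..
lemma ap3: "atiyah_poly p 3 = smult (SS (p 3) (p 0) * (SS (p 3) (p 1) * SS (p 3) (p 2)))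
   ([:- UU (p 3) (p 0), 1:] * ([:- UU (p 3) (p 1), 1:] * [:- UU (p 3) (p 2), 1:]))"
  unfolding apx hvals lin_smult lin_smult2 smult3 ..
lemma det_mat_Suc:
  "det (mat (Suc n) (Suc n) f) = (\<Sum>j<Suc n. f (0,j) * ((-1)^j *
      det (mat n n (\<lambda>(i,k). f (Suc i, if k < j then k else Suc k)))))"
proof -
  have A: "mat (Suc n) (Suc n) f \<in> carrier_mat (Suc n) (Suc n)" by simp
  have "det (mat (Suc n) (Suc n) f) = (\<Sum>j<Suc n. mat (Suc n) (Suc n) f $$ (0,j) * cofactor (mat (Suc n) (Suc n) f) 0 j)"
    by (rule laplace_expansion_row[OF A]) simp
  also have "\<dots> = (\<Sum>j<Suc n. f (0,j) * ((-1)^j *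
      det (mat n n (\<lambda>(i,k). f (Suc i, if k < j then k else Suc k)))))"
  proof (rule sum.cong[OF refl])
    fix j assume j: "j \<in> {..<Suc n}"
    have "mat_delete (mat (Suc n) (Suc n) f) 0 j = mat n n (\<lambda>(i,k). f (Suc i, if k < j then k else Suc k))"
      unfolding mat_delete_def using j by (intro eq_matI) auto
    thus "mat (Suc n) (Suc n) f $$ (0, j) * cofactor (mat (Suc n) (Suc n) f) 0 j =
         f (0, j) * ((-1) ^ j * det (mat n n (\<lambda>(i, k). f (Suc i, if k < j then k else Suc k))))"
      unfolding cofactor_def using j by simp
  qed
  finally show ?thesis .
qed

lemma det_mat_0: "det (mat 0 0 f) = 1"
  by (rule det_dim_zero) simp

lemma det4: "det (mat 4 4 F) = leib4 (\<lambda>i k. F (i, k))" for F :: "nat \<times> nat \<Rightarrow> complex"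
proof -
  have 4: "(4::nat) = Suc (Suc (Suc (Suc 0)))" by simp
  show ?thesis
    unfolding 4 det_mat_Suc det_mat_0 leib4_def
    apply (simp add: lessThan_Suc eval_nat_numeral)
    by Groebner_Basis.algebra
qed

definition Cpart :: "(nat \<Rightarrow> 'a::comm_ring_1) \<Rightarrow> (nat \<Rightarrow> 'a) \<Rightarrow> (nat \<Rightarrow> 'a) \<Rightarrow> 'a" where
  "Cpart ca cb cg = 96 + 16 * ((ca 1 + cb 1 + cg 1) + (ca 2 + cb 2 + cg 2) + (ca 3 + cb 3 + cg 3) + (ca 4 + cb 4 + cg 4)) + 2 * ((ca 1 + cb 1 + cg 1) * (ca 2 + cg 3 + cb 4) + (ca 2 + cb 2 + cg 2) * (ca 3 + cg 4 + cb 1) + (ca 3 + cb 3 + cg 3) * (ca 4 + cg 1 + cb 2) + (ca 4 + cb 4 + cg 4) * (ca 1 + cg 2 + cb 3))"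

definition Epart :: "(nat \<Rightarrow> 'a::comm_ring_1) \<Rightarrow> (nat \<Rightarrow> 'a) \<Rightarrow> (nat \<Rightarrow> 'a) \<Rightarrow> 'a" where
  "Epart sa sb sg = 2 * ((sa 1 * sa 2 + sb 1 * sb 2 - sg 1 * sa 2 - sg 2 * sb 1 + sg 1 * sa 3 + sg 1 * sb 3) + (sa 2 * sa 3 + sb 2 * sb 3 - sg 2 * sa 3 - sg 3 * sb 2 + sg 2 * sa 4 + sg 2 * sb 4) + (sa 3 * sa 4 + sb 3 * sb 4 - sg 3 * sa 4 - sg 4 * sb 3 + sg 3 * sa 1 + sg 3 * sb 1) + (sa 4 * sa 1 + sb 4 * sb 1 - sg 4 * sa 1 - sg 1 * sb 4 + sg 4 * sa 2 + sg 4 * sb 2)) - 4 * (sa 2 * sb 1 + sa 3 * sb 2 + sa 4 * sb 3 + sa 1 * sb 4) + 4 * sg 1 * sg 3 + 4 * sg 2 * sg 4"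

definition G4m :: "(nat \<Rightarrow> 'a::comm_ring_1) \<Rightarrow> (nat \<Rightarrow> 'a) \<Rightarrow> (nat \<Rightarrow> 'a) \<Rightarrow> (nat \<Rightarrow> 'a) \<Rightarrow> (nat \<Rightarrow> 'a) \<Rightarrow> (nat \<Rightarrow> 'a) \<Rightarrow> 'a" where
  "G4m ca cb cg sa sb sg = Cpart ca cb cg - Epart sa sb sg"

definition Gfun :: "(nat \<Rightarrow> 'a::comm_ring_1) \<Rightarrow> (nat \<Rightarrow> 'a) \<Rightarrow> (nat \<Rightarrow> 'a) \<Rightarrow> (nat \<Rightarrow> 'a) \<Rightarrow> (nat \<Rightarrow> 'a) \<Rightarrow> (nat \<Rightarrow> 'a) \<Rightarrow> 'a" where
  "Gfun ca cb cg sa sb sg = 24 + 8 * ((ca 1 + cb 1 + cg 1) + (ca 2 + cb 2 + cg 2) + (ca 3 + cb 3 + cg 3) + (ca 4 + cb 4 + cg 4)) + 2 * ((ca 1 + cb 1 + cg 1) * (ca 2 + cg 3 + cb 4) + (ca 2 + cb 2 + cg 2) * (ca 3 + cg 4 + cb 1) + (ca 3 + cb 3 + cg 3) * (ca 4 + cg 1 + cb 2) + (ca 4 + cb 4 + cg 4) * (ca 1 + cg 2 + cb 3)) + 2 * ((sa 1 * sa 2 + sb 1 * sb 2 - sg 1 * sa 2 - sg 2 * sb 1 + sg 1 * sa 3 + sg 1 * sb 3) + (sa 2 * sa 3 + sb 2 * sb 3 - sg 2 * sa 3 - sg 3 * sb 2 + sg 2 * sa 4 + sg 2 * sb 4) +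 (sa 3 * sa 4 + sb 3 * sb 4 - sg 3 * sa 4 - sg 4 * sb 3 + sg 3 * sa 1 + sg 3 * sb 1) + (sa 4 * sa 1 + sb 4 * sb 1 - sg 4 * sa 1 - sg 1 * sb 4 + sg 4 * sa 2 + sg 4 * sb 2)) - 4 * (sa 2 * sb 1 + sa 3 * sb 2 + sa 4 * sb 3 + sa 1 * sb 4) + 4 * sg 1 * sg 3 + 4 * sg 2 * sg 4"

definition colp :: "(nat \<Rightarrow> nat \<Rightarrow> complex) \<Rightarrow> (nat \<Rightarrow> nat \<Rightarrow> complex) \<Rightarrow> nat \<Rightarrow> complex poly" where
  "colp e f k = (if k = 0 then [:1, f 0 1:] * ([:1, f 0 2:] * [:1, f 0 3:])
     else if k = 1 then [:- e 0 1, 1:] * ([:1, f 1 2:] * [:1, f 1 3:])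
     else if k = 2 then [:- e 0 2, 1:] * ([:- e 1 2, 1:] * [:1, f 2 3:])
     else [:- e 0 3, 1:] * ([:- e 1 3, 1:] * [:- e 2 3, 1:]))"

definition Dfun :: "(nat \<Rightarrow> nat \<Rightarrow> complex) \<Rightarrow> (nat \<Rightarrow> nat \<Rightarrow> complex) \<Rightarrow> complex" where
  "Dfun e f = leib4 (\<lambda>i k. coeff (colp e f k) i)"

lemma coeff3:
  fixes a1 b1 a2 b2 a3 b3 :: "'a::comm_ring_1"
  shows "coeff ([:a1,b1:] * ([:a2,b2:] * [:a3,b3:])) 0 = a1*a2*a3"
   "coeff ([:a1,b1:] * ([:a2,b2:] * [:a3,b3:])) 1 = b1*a2*a3 + a1*b2*a3 + a1*a2*b3"
   "coeff ([:a1,b1:] * ([:a2,b2:] * [:a3,b3:])) 2 = a1*b2*b3 + b1*a2*b3 + b1*b2*a3"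
   "coeff ([:a1,b1:] * ([:a2,b2:] * [:a3,b3:])) 3 = b1*b2*b3"
  by (simp_all add: coeff_mult_0 numeral_eq_Suc algebra_simps)

lemma colp_simps:
  "colp e f 0 = [:1, f 0 1:] * ([:1, f 0 2:] * [:1, f 0 3:])"
  "colp e f 1 = [:- e 0 1, 1:] * ([:1, f 1 2:] * [:1, f 1 3:])"
  "colp e f 2 = [:- e 0 2, 1:] * ([:- e 1 2, 1:] * [:1, f 2 3:])"
  "colp e f 3 = [:- e 0 3, 1:] * ([:- e 1 3, 1:] * [:- e 2 3, 1:])"
  by (simp_all add: colp_def)

lemma core:
  fixes e f :: "nat \<Rightarrow> nat \<Rightarrow> complex" and ca cb cg sa sb sg :: "nat \<Rightarrow> complex" 
  assumes ef: "e 0 1 * f 0 1 = 1" "e 0 2 * f 0 2 = 1" "e 0 3 * f 0 3 = 1" "e 1 2 * f 1 2 = 1" "e 1 3 * f 1 3 = 1" "e 2 3 * f 2 3 = 1"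
    and hc: "ca 1 = e 0 2 * f 0 1 + e 0 1 * f 0 2" "ca 2 = e 1 3 * f 1 2 + e 1 2 * f 1 3" "ca 3 = (- e 0 2) * f 2 3 + e 2 3 * (- f 0 2)" "ca 4 = (- e 1 3) * (- f 0 3) + (- e 0 3) * (- f 1 3)" "cb 1 = e 0 3 * f 0 2 + e 0 2 * f 0 3" "cb 2 = (- e 0 1) * f 1 3 + e 1 3 * (- f 0 1)" "cb 3 = (- e 1 2) * (- f 0 2) + (- e 0 2) * (- f 1 2)" "cb 4 = (- e 2 3) * (- f 1 3) + (- e 1 3) * (- f 2 3)" "cg 1 = e 0 1 * f 0 3 + e 0 3 * f 0 1" "cg 2 = e 1 2 * (- f 0 1) + (- e 0 1) * f 1 2" "cg 3 = e 2 3 * (- f 1 2) + (- e 1 2) * f 2 3" "cg 4 = (- e 0 3) * (- f 2 3) + (- e 2 3) * (- f 0 3)"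
    and hs: "sa 1 = e 0 2 * f 0 1 - e 0 1 * f 0 2" "sa 2 = e 1 3 * f 1 2 - e 1 2 * f 1 3" "sa 3 = (- e 0 2) * f 2 3 - e 2 3 * (- f 0 2)" "sa 4 = (- e 1 3) * (- f 0 3) - (- e 0 3) * (- f 1 3)" "sb 1 = e 0 3 * f 0 2 - e 0 2 * f 0 3" "sb 2 = (- e 0 1) * f 1 3 - e 1 3 * (- f 0 1)" "sb 3 = (- e 1 2) * (- f 0 2) - (- e 0 2) * (- f 1 2)" "sb 4 = (- e 2 3) * (- f 1 3) - (- e 1 3) * (- f 2 3)" "sg 1 = - (e 0 1 * f 0 3 - e 0 3 * f 0 1)" "sg 2 = - (e 1 2 * (- f 0 1) - (- e 0 1) * f 1 2)" "sg 3 = - (e 2 3 * (- f 1 2) - (- e 1 2) * f 2 3)" "sg 4 = - ((- e 0 3) * (- f 2 3) - (- e 2 3) * (- f 0 3))"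
  shows "4 * Dfun e f = G4m ca cb cg sa sb sg"
  unfolding Dfun_def leib4_def colp_simps coeff3 G4m_def Cpart_def Epart_def hc hs
  using ef by Groebner_Basis.algebra

lemma G_link:
  fixes ca cb cg sa sb sg :: "nat \<Rightarrow> complex" and u :: complex
  assumes "u * u = -1"
  shows "4 * Gfun ca cb cg sa sb sg = G4m (\<lambda>j. 2 * ca j) (\<lambda>j. 2 * cb j) (\<lambda>j. 2 * cg j)
     (\<lambda>j. 2 * sa j * u) (\<lambda>j. 2 * sb j * u) (\<lambda>j. 2 * sg j * u)"
proof -
  have sc: "Epart (\<lambda>j. 2 * sa j * u) (\<lambda>j. 2 * sb j * u) (\<lambda>j. 2 * sg j * u) =
     (u * u) * Epart (\<lambda>j. 2 * sa j) (\<lambda>j. 2 * sb j) (\<lambda>j. 2 * sg j)"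
    unfolding Epart_def by Groebner_Basis.algebra
  have "4 * Gfun ca cb cg sa sb sg = Cpart (\<lambda>j. 2 * ca j) (\<lambda>j. 2 * cb j) (\<lambda>j. 2 * cg j)
     + Epart (\<lambda>j. 2 * sa j) (\<lambda>j. 2 * sb j) (\<lambda>j. 2 * sg j)"
    unfolding Gfun_def Cpart_def Epart_def by Groebner_Basis.algebra
  thus ?thesis unfolding G4m_def sc assms by simp
qed

lemma sin_pos:
  assumes "x \<noteq> y" "z \<noteq> y" "sgn (cross3 y x z) = t" "t \<noteq> 0"
  shows "2 * complex_of_real (sin (uangle x y z)) * (complex_of_real t * \<i>) =
     UU z y * cnj (UU x y) - UU x y * cnj (UU z y)"
proof -
  have "cross3 y x z \<noteq> 0" using assms(3,4) by auto
  from sin_ang[OF assms(1,2) this] show ?thesis unfolding assms(3) .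
qed

lemma sin_neg:
  assumes "x \<noteq> y" "z \<noteq> y" "sgn (cross3 y x z) = - t" "t \<noteq> 0"
  shows "2 * complex_of_real (sin (uangle x y z)) * (complex_of_real t * \<i>) =
     - (UU z y * cnj (UU x y) - UU x y * cnj (UU z y))"
proof -
  have "cross3 y x z \<noteq> 0" using assms(3,4) by auto
  from sin_ang[OF assms(1,2) this] have
    "2 * complex_of_real (sin (uangle x y z)) * (complex_of_real (- t) * \<i>) =
     UU z y * cnj (UU x y) - UU x y * cnj (UU z y)" unfolding assms(3) .
  thus ?thesis by (simp add: algebra_simps)
qed

theorem theorem1:
  fixes z1 z2 z3 z4 :: complex
  defines "v \<equiv> vtx z1 z2 z3 z4"
  defines "r \<equiv> (\<lambda>j k. cmod (v k - v j))"
  defines "\<alpha> \<equiv> (\<lambda>j. uangle (v (j+1)) (v j) (v (j+2)))"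
  defines "\<beta> \<equiv> (\<lambda>j. uangle (v (j+2)) (v j) (v (j-1)))"
  defines "\<gamma> \<equiv> (\<lambda>j. uangle (v (j-1)) (v j) (v (j+1)))"
  defines "S1 \<equiv> (\<Sum>j=1..4. cos (\<alpha> j) + cos (\<beta> j) + cos (\<gamma> j))"
  defines "S2 \<equiv> (\<Sum>j=1..4. (cos (\<alpha> j) + cos (\<beta> j) + cos (\<gamma> j)) *
                           (cos (\<alpha> (j+1)) + cos (\<gamma> (j+2)) + cos (\<beta> (j+3))))"
  defines "E \<equiv> 2 * (\<Sum>j=1..4. sin (\<alpha> j) * sin (\<alpha> (j+1)) + sin (\<beta> j) * sin (\<beta> (j+1))
                   - sin (\<gamma> j) * sin (\<alpha> (j+1)) - sin (\<gamma> (j+1)) * sin (\<beta> j)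
                   + sin (\<gamma> j) * sin (\<alpha> (j+2)) + sin (\<gamma> j) * sin (\<beta> (j+2)))
              - 4 * (\<Sum>j=1..4. sin (\<alpha> (j+1)) * sin (\<beta> j))
              + 4 * sin (\<gamma> 1) * sin (\<gamma> 3) + 4 * sin (\<gamma> 2) * sin (\<gamma> 4)"
  assumes "convex_quad z1 z2 z3 z4"
  shows "Atiyah z1 z2 z3 z4 =
    complex_of_real (r 1 2 * r 1 3 * r 1 4 * r 2 3 * r 2 4 * r 3 4 * (24 + 8 * S1 + 2 * S2 + E))"
proof -
  note cq0 = \<open>convex_quad z1 z2 z3 z4\<close>
  define p where "p = (\<lambda>i::nat. [z1, z2, z3, z4] ! i)"
  have p: "p 0 = z1" "p 1 = z2" "p 2 = z3" "p 3 = z4" by (simp_all add: p_def)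
  have v: "v 0 = z4" "v 1 = z1" "v 2 = z2" "v 3 = z3" "v 4 = z4" "v 5 = z1" "v 6 = z2" "v 7 = z3" "v 8 = z4" "v 9 = z1"
    by (simp_all add: v_def vtx_def)
  have I4: "{1..4::int} = {1,2,3,4}" by auto
  have cq: "(0 < cross3 z1 z2 z3 \<and> 0 < cross3 z1 z2 z4 \<and> 0 < cross3 z2 z3 z4 \<and> 0 < cross3 z2 z3 z1 \<and>
        0 < cross3 z3 z4 z1 \<and> 0 < cross3 z3 z4 z2 \<and> 0 < cross3 z4 z1 z2 \<and> 0 < cross3 z4 z1 z3) \<or>
      (cross3 z1 z2 z3 < 0 \<and> cross3 z1 z2 z4 < 0 \<and> cross3 z2 z3 z4 < 0 \<and> cross3 z2 z3 z1 < 0 \<and>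
        cross3 z3 z4 z1 < 0 \<and> cross3 z3 z4 z2 < 0 \<and> cross3 z4 z1 z2 < 0 \<and> cross3 z4 z1 z3 < 0)"
    using cq0 unfolding convex_quad_def Let_def I4 by (simp add: vtx_def)
  have nz: "cross3 z1 z2 z3 \<noteq> 0" "cross3 z2 z3 z4 \<noteq> 0" "cross3 z3 z4 z1 \<noteq> 0"
    using cq by auto
  have d: "z1 \<noteq> z2" "z1 \<noteq> z3" "z1 \<noteq> z4" "z2 \<noteq> z3" "z2 \<noteq> z4" "z3 \<noteq> z4"
          "z2 \<noteq> z1" "z3 \<noteq> z1" "z4 \<noteq> z1" "z3 \<noteq> z2" "z4 \<noteq> z2" "z4 \<noteq> z3"
    using cross3_distinct[OF nz(1)] cross3_distinct[OF nz(2)] cross3_distinct[OF nz(3)] by auto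
  define t where "t = sgn (cross3 z1 z2 z3)"
  have t: "t \<noteq> 0" "t * t = 1" using cq unfolding t_def by auto
  have sg: "sgn (cross3 z1 z2 z3) = t" "sgn (cross3 z2 z3 z4) = t" "sgn (cross3 z3 z4 z1) = t" "sgn (cross3 z4 z1 z2) = t" "sgn (cross3 z1 z3 z4) = t" "sgn (cross3 z2 z4 z1) = t" "sgn (cross3 z3 z1 z2) = t" "sgn (cross3 z4 z2 z3) = t" "sgn (cross3 z1 z4 z2) = - t" "sgn (cross3 z2 z1 z3) = - t" "sgn (cross3 z3 z2 z4) = - t" "sgn (cross3 z4 z3 z1) = - t"
    using cq unfolding t_def cross3_rot[of z1 z3 z4] cross3_rot[of z2 z4 z1] cross3_rot[of z3 z1 z2] cross3_rot[of z4 z2 z3] cross3_swap[of z1 z2 z4] cross3_swap[of z2 z3 z1] cross3_swap[of z3 z4 z2] cross3_swap[of z4 z1 z3] by auto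
  have cA1: "2 * complex_of_real (cos (uangle z2 z1 z3)) = UU z3 z1 * cnj (UU z2 z1) + UU z2 z1 * cnj (UU z3 z1)"
    by (rule cos_ang) (use d in auto)
  have sA1: "2 * complex_of_real (sin (uangle z2 z1 z3)) * (complex_of_real t * \<i>) = UU z3 z1 * cnj (UU z2 z1) - UU z2 z1 * cnj (UU z3 z1)"
    by (rule sin_pos) (use d sg t in auto)
  have cA2: "2 * complex_of_real (cos (uangle z3 z2 z4)) = UU z4 z2 * cnj (UU z3 z2) + UU z3 z2 * cnj (UU z4 z2)"
    by (rule cos_ang) (use d in auto)
  have sA2: "2 * complex_of_real (sin (uangle z3 z2 z4)) * (complex_of_real t * \<i>) = UU z4 z2 * cnj (UU z3 z2) - UU z3 z2 * cnj (UU z4 z2)"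
    by (rule sin_pos) (use d sg t in auto)
  have cA3: "2 * complex_of_real (cos (uangle z4 z3 z1)) = UU z1 z3 * cnj (UU z4 z3) + UU z4 z3 * cnj (UU z1 z3)"
    by (rule cos_ang) (use d in auto)
  have sA3: "2 * complex_of_real (sin (uangle z4 z3 z1)) * (complex_of_real t * \<i>) = UU z1 z3 * cnj (UU z4 z3) - UU z4 z3 * cnj (UU z1 z3)"
    by (rule sin_pos) (use d sg t in auto)
  have cA4: "2 * complex_of_real (cos (uangle z1 z4 z2)) = UU z2 z4 * cnj (UU z1 z4) + UU z1 z4 * cnj (UU z2 z4)"
    by (rule cos_ang) (use d in auto)
  have sA4: "2 * complex_of_real (sin (uangle z1 z4 z2)) * (complex_of_real t * \<i>) = UU z2 z4 * cnj (UU z1 z4) - UU z1 z4 * cnj (UU z2 z4)"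
    by (rule sin_pos) (use d sg t in auto)
  have cB1: "2 * complex_of_real (cos (uangle z3 z1 z4)) = UU z4 z1 * cnj (UU z3 z1) + UU z3 z1 * cnj (UU z4 z1)"
    by (rule cos_ang) (use d in auto)
  have sB1: "2 * complex_of_real (sin (uangle z3 z1 z4)) * (complex_of_real t * \<i>) = UU z4 z1 * cnj (UU z3 z1) - UU z3 z1 * cnj (UU z4 z1)"
    by (rule sin_pos) (use d sg t in auto)
  have cB2: "2 * complex_of_real (cos (uangle z4 z2 z1)) = UU z1 z2 * cnj (UU z4 z2) + UU z4 z2 * cnj (UU z1 z2)"
    by (rule cos_ang) (use d in auto)
  have sB2: "2 * complex_of_real (sin (uangle z4 z2 z1)) * (complex_of_real t * \<i>) = UU z1 z2 * cnj (UU z4 z2) - UU z4 z2 * cnj (UU z1 z2)"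
    by (rule sin_pos) (use d sg t in auto)
  have cB3: "2 * complex_of_real (cos (uangle z1 z3 z2)) = UU z2 z3 * cnj (UU z1 z3) + UU z1 z3 * cnj (UU z2 z3)"
    by (rule cos_ang) (use d in auto)
  have sB3: "2 * complex_of_real (sin (uangle z1 z3 z2)) * (complex_of_real t * \<i>) = UU z2 z3 * cnj (UU z1 z3) - UU z1 z3 * cnj (UU z2 z3)"
    by (rule sin_pos) (use d sg t in auto)
  have cB4: "2 * complex_of_real (cos (uangle z2 z4 z3)) = UU z3 z4 * cnj (UU z2 z4) + UU z2 z4 * cnj (UU z3 z4)"
    by (rule cos_ang) (use d in auto)
  have sB4: "2 * complex_of_real (sin (uangle z2 z4 z3)) * (complex_of_real t * \<i>) = UU z3 z4 * cnj (UU z2 z4) - UU z2 z4 * cnj (UU z3 z4)"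
    by (rule sin_pos) (use d sg t in auto)
  have cG1: "2 * complex_of_real (cos (uangle z4 z1 z2)) = UU z2 z1 * cnj (UU z4 z1) + UU z4 z1 * cnj (UU z2 z1)"
    by (rule cos_ang) (use d in auto)
  have sG1: "2 * complex_of_real (sin (uangle z4 z1 z2)) * (complex_of_real t * \<i>) = - (UU z2 z1 * cnj (UU z4 z1) - UU z4 z1 * cnj (UU z2 z1))"
    by (rule sin_neg) (use d sg t in auto)
  have cG2: "2 * complex_of_real (cos (uangle z1 z2 z3)) = UU z3 z2 * cnj (UU z1 z2) + UU z1 z2 * cnj (UU z3 z2)"
    by (rule cos_ang) (use d in auto)
  have sG2: "2 * complex_of_real (sin (uangle z1 z2 z3)) * (complex_of_real t * \<i>) = - (UU z3 z2 * cnj (UU z1 z2) - UU z1 z2 * cnj (UU z3 z2))"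
    by (rule sin_neg) (use d sg t in auto)
  have cG3: "2 * complex_of_real (cos (uangle z2 z3 z4)) = UU z4 z3 * cnj (UU z2 z3) + UU z2 z3 * cnj (UU z4 z3)"
    by (rule cos_ang) (use d in auto)
  have sG3: "2 * complex_of_real (sin (uangle z2 z3 z4)) * (complex_of_real t * \<i>) = - (UU z4 z3 * cnj (UU z2 z3) - UU z2 z3 * cnj (UU z4 z3))"
    by (rule sin_neg) (use d sg t in auto)
  have cG4: "2 * complex_of_real (cos (uangle z3 z4 z1)) = UU z1 z4 * cnj (UU z3 z4) + UU z3 z4 * cnj (UU z1 z4)"
    by (rule cos_ang) (use d in auto)
  have sG4: "2 * complex_of_real (sin (uangle z3 z4 z1)) * (complex_of_real t * \<i>) = - (UU z1 z4 * cnj (UU z3 z4) - UU z3 z4 * cnj (UU z1 z4))"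
    by (rule sin_neg) (use d sg t in auto)
  have rev: "UU z1 z2 = - UU z2 z1" "UU z1 z3 = - UU z3 z1" "UU z1 z4 = - UU z4 z1"
     "UU z2 z3 = - UU z3 z2" "UU z2 z4 = - UU z4 z2" "UU z3 z4 = - UU z4 z3"
    by (rule UU_swap)+
  define ca where "ca = (\<lambda>j::nat. cos (\<alpha> (int j)))"
  define cb where "cb = (\<lambda>j::nat. cos (\<beta> (int j)))"
  define cg where "cg = (\<lambda>j::nat. cos (\<gamma> (int j)))"
  define sa where "sa = (\<lambda>j::nat. sin (\<alpha> (int j)))"
  define sb where "sb = (\<lambda>j::nat. sin (\<beta> (int j)))"
  define sgm where "sgm = (\<lambda>j::nat. sin (\<gamma> (int j)))"
  have angv: "\<alpha> 1 = uangle z2 z1 z3" "\<alpha> 2 = uangle z3 z2 z4" "\<alpha> 3 = uangle z4 z3 z1" "\<alpha> 4 = uangle z1 z4 z2"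
    "\<beta> 1 = uangle z3 z1 z4" "\<beta> 2 = uangle z4 z2 z1" "\<beta> 3 = uangle z1 z3 z2" "\<beta> 4 = uangle z2 z4 z3"
    "\<gamma> 1 = uangle z4 z1 z2" "\<gamma> 2 = uangle z1 z2 z3" "\<gamma> 3 = uangle z2 z3 z4" "\<gamma> 4 = uangle z3 z4 z1"
    "\<alpha> 5 = uangle z2 z1 z3" "\<alpha> 6 = uangle z3 z2 z4" "\<gamma> 5 = uangle z4 z1 z2" "\<gamma> 6 = uangle z1 z2 z3"
    "\<beta> 5 = uangle z3 z1 z4" "\<beta> 6 = uangle z4 z2 z1" "\<beta> 7 = uangle z1 z3 z2"
    by (simp_all add: \<alpha>_def \<beta>_def \<gamma>_def v)
  have realG: "24 + 8 * S1 + 2 * S2 + E = Gfun ca cb cg sa sb sgm"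
    unfolding S1_def S2_def E_def Gfun_def ca_def cb_def cg_def sa_def sb_def sgm_def I4
    by (simp add: angv)
  define e where "e = (\<lambda>a b. UU (p b) (p a))"
  define f where "f = (\<lambda>a b. cnj (UU (p b) (p a)))"
  define cs where "cs = (\<lambda>k::nat. if k = 0 then SS (p 1) (p 0) * (SS (p 2) (p 0) * SS (p 3) (p 0))
      else if k = 1 then SS (p 1) (p 0) * (SS (p 2) (p 1) * SS (p 3) (p 1))
      else if k = 2 then SS (p 2) (p 0) * (SS (p 2) (p 1) * SS (p 3) (p 2))
      else SS (p 3) (p 0) * (SS (p 3) (p 1) * SS (p 3) (p 2)))"
  have "Atiyah z1 z2 z3 z4 = det (mat 4 4 (\<lambda>(i, k). coeff (atiyah_poly p k) i))"
    unfolding Atiyah_def p_def Let_def ..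
  also have "\<dots> = leib4 (\<lambda>i k. coeff (atiyah_poly p k) i)"
    by (simp add: det4)
  also have "\<dots> = leib4 (\<lambda>i k. cs k * coeff (colp e f k) i)"
  proof (rule leib4_cong)
    fix i k :: nat assume "i < 4" "k < 4"
    hence "k = 0 \<or> k = 1 \<or> k = 2 \<or> k = 3" by auto
    thus "coeff (atiyah_poly p k) i = cs k * coeff (colp e f k) i"
      by (elim disjE) (simp_all only: ap0 ap1 ap2 ap3 colp_simps e_def f_def cs_def coeff_smult, simp_all)
  qed
  also have "\<dots> = cs 0 * cs 1 * cs 2 * cs 3 * Dfun e f"
    unfolding leib4_scale Dfun_def ..
  finally have lhs: "Atiyah z1 z2 z3 z4 = cs 0 * cs 1 * cs 2 * cs 3 * Dfun e f" .
  have rprod: "complex_of_real (r 1 2 * r 1 3 * r 1 4 * r 2 3 * r 2 4 * r 3 4) = cs 0 * cs 1 * cs 2 * cs 3"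
  proof -
    have "complex_of_real (r 1 2 * r 1 3 * r 1 4 * r 2 3 * r 2 4 * r 3 4) =
      complex_of_real (cmod (z2 - z1)) * complex_of_real (cmod (z3 - z1)) * complex_of_real (cmod (z4 - z1)) *
      complex_of_real (cmod (z3 - z2)) * complex_of_real (cmod (z4 - z2)) * complex_of_real (cmod (z4 - z3))"
      by (simp add: r_def v)
    also have "\<dots> = (SS z2 z1 * SS z2 z1) * (SS z3 z1 * SS z3 z1) * (SS z4 z1 * SS z4 z1) *
       (SS z3 z2 * SS z3 z2) * (SS z4 z2 * SS z4 z2) * (SS z4 z3 * SS z4 z3)"
      by (simp only: SS_sq)
    also have "\<dots> = cs 0 * cs 1 * cs 2 * cs 3"
      unfolding cs_def p by simp
    finally show ?thesis .
  qed
  define CA where "CA = (\<lambda>j. 2 * complex_of_real (ca j))"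
  define CB where "CB = (\<lambda>j. 2 * complex_of_real (cb j))"
  define CG where "CG = (\<lambda>j. 2 * complex_of_real (cg j))"
  define SA where "SA = (\<lambda>j. 2 * complex_of_real (sa j) * (complex_of_real t * \<i>))"
  define SB where "SB = (\<lambda>j. 2 * complex_of_real (sb j) * (complex_of_real t * \<i>))"
  define SG where "SG = (\<lambda>j. 2 * complex_of_real (sgm j) * (complex_of_real t * \<i>))"
  have uu: "(complex_of_real t * \<i>) * (complex_of_real t * \<i>) = -1"
  proof -
    have "(complex_of_real t * \<i>) * (complex_of_real t * \<i>) = - complex_of_real (t * t)" by (simp add: algebra_simps)
    thus ?thesis using t by simp
  qed
  have glink: "4 * Gfun (\<lambda>j. complex_of_real (ca j)) (\<lambda>j. complex_of_real (cb j)) (\<lambda>j. complex_of_real (cg j))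
      (\<lambda>j. complex_of_real (sa j)) (\<lambda>j. complex_of_real (sb j)) (\<lambda>j. complex_of_real (sgm j)) = G4m CA CB CG SA SB SG"
    unfolding CA_def CB_def CG_def SA_def SB_def SG_def by (rule G_link[OF uu])
  have cD: "4 * Dfun e f = G4m CA CB CG SA SB SG"
  proof (rule core)
    show "e 0 1 * f 0 1 = 1" unfolding e_def f_def by (rule UU_unit) (use d in \<open>simp add: p_def\<close>)
    show "e 0 2 * f 0 2 = 1" unfolding e_def f_def by (rule UU_unit) (use d in \<open>simp add: p_def\<close>)
    show "e 0 3 * f 0 3 = 1" unfolding e_def f_def by (rule UU_unit) (use d in \<open>simp add: p_def\<close>)
    show "e 1 2 * f 1 2 = 1" unfolding e_def f_def by (rule UU_unit) (use d in \<open>simp add: p_def\<close>)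
    show "e 1 3 * f 1 3 = 1" unfolding e_def f_def by (rule UU_unit) (use d in \<open>simp add: p_def\<close>)
    show "e 2 3 * f 2 3 = 1" unfolding e_def f_def by (rule UU_unit) (use d in \<open>simp add: p_def\<close>)
  qed (simp_all add: CA_def CB_def CG_def SA_def SB_def SG_def ca_def cb_def cg_def sa_def sb_def sgm_def angv e_def f_def p p_def cA1 cA2 cA3 cA4 cB1 cB2 cB3 cB4 cG1 cG2 cG3 cG4 sA1 sA2 sA3 sA4 sB1 sB2 sB3 sB4 sG1 sG2 sG3 sG4 rev)
  have Gc: "complex_of_real (Gfun ca cb cg sa sb sgm) = Gfun (\<lambda>j. complex_of_real (ca j)) (\<lambda>j. complex_of_real (cb j)) (\<lambda>j. complex_of_real (cg j))
      (\<lambda>j. complex_of_real (sa j)) (\<lambda>j. complex_of_real (sb j)) (\<lambda>j. complex_of_real (sgm j))"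
    unfolding Gfun_def by simp
  have DG: "Dfun e f = complex_of_real (Gfun ca cb cg sa sb sgm)"
  proof -
    have "4 * Dfun e f = 4 * complex_of_real (Gfun ca cb cg sa sb sgm)"
      unfolding Gc using cD glink by (rule trans[OF _ sym])
    thus ?thesis by simp
  qed
  have "Atiyah z1 z2 z3 z4 = complex_of_real (r 1 2 * r 1 3 * r 1 4 * r 2 3 * r 2 4 * r 3 4) * complex_of_real (Gfun ca cb cg sa sb sgm)"
    unfolding lhs rprod DG ..
  also have "\<dots> = complex_of_real (r 1 2 * r 1 3 * r 1 4 * r 2 3 * r 2 4 * r 3 4 * (24 + 8 * S1 + 2 * S2 + E))"
    unfolding realG by (rule of_real_mult[symmetric])
  finally show ?thesis .
qed

end
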